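(* Let $m,n$ be positive integers, let $D$ be an $m\times n$ diagram, and let $\sigma\in S_{m+n}$ be its restricted permutation. Then $\ker(P_\omega+P_\sigma)\cong\ker(M(D))$ as $\mathbb{Q}$-vector spaces; in particular they have the same dimension.
   Context: An $m\times n$ diagram is an $m\times n$ grid of squares, each coloured black or white. Rows are numbered top to bottom and columns left to right. Pipe dreams: on each white square place two arcs, one joining its bottom and left edge midpoints and one joining its top and right edge midpoints. On each black square place a cross, i.e. a vertical segment joining its bottom and top midpoints and a horizontal segment joining its left and right midpoints. Label the boundary as follows: the row that is $r$-th from the bottom gets label $r$ at its left end and $n+r$ at its right end; column $j$ gets label $m+j$ at its top and $j$ at its bottom. The restricted permutation $\sigma$ of $D$ sends a label $i$ on the bottom or right side to the label on the left or top side where the pipe entering at $i$ exits (going straight through crosses). The permutation $\omega$ is defined by $\omega(i)=m+i$ for $1\le i\le n$ and $\omega(i)=i-n$ for $n<i\le m+n$. For $\mu\in S_k$, $P_\mu$ is the $k\times k$ matrix with $P_\mu[i,j]=\delta_{j,\mu(i)}$. If $D$ has $N$ white squares, label them bijectively by $[N]$. Then $M(D)$ is the $N\times N$ skew-symmetric matrix whose entries are as follows. $M(D)[i,j]=1$ if white square $i$ lies strictly below square $j$ in the same column or strictly to the right of square $j$ in the same row. $M(D)[i,j]=-1$ if square $i$ lies strictly above square $j$ in the same column or strictly to the left of it in the same row. $M(D)[i,j]=0$ otherwise. *)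

theory Defs
  imports "Jordan_Normal_Form.Matrix_Kernel"
begin

(* An m x n diagram is a predicate D :: nat => nat => bool on rows 1..m (top to bottom)
   and columns 1..n (left to right); D i j = True means square (i,j) is black. *)

definition white_squares :: "(nat \<Rightarrow> nat \<Rightarrow> bool) \<Rightarrow> nat \<Rightarrow> nat \<Rightarrow> (nat \<times> nat) set" where
  "white_squares D m n = {(i,j). 1 \<le> i \<and> i \<le> m \<and> 1 \<le> j \<and> j \<le> n \<and> \<not> D i j}"

(* The pipe is entering square (i,j); up = True means it enters through
   the bottom edge (travelling upwards), up = False means through the right edge
   (travelling leftwards).  i = 0 means it has left through the top edge in column j
   (label m + j); j = 0 means it has left through the left edge in row i
   (row i is the (m+1-i)-th from the bottom, label m + 1 - i).
   White square: bottom<->left, right<->top; black square: straight through. *)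
function pipe_exit :: "(nat \<Rightarrow> nat \<Rightarrow> bool) \<Rightarrow> nat \<Rightarrow> nat \<Rightarrow> nat \<Rightarrow> bool \<Rightarrow> nat" where
  "pipe_exit D m i j up =
     (if i = 0 then m + j
      else if j = 0 then m + 1 - i
      else (let up' = (if D i j then up else \<not> up) in
            if up' then pipe_exit D m (i - 1) j True
            else pipe_exit D m i (j - 1) False))"
  by pat_completeness auto
termination
  by (relation "measure (\<lambda>(D, m, i, j, up). i + j)") auto

(* restricted permutation: label k in 1..n is the bottom of column k,
   label n + r (1 <= r <= m) is the right end of the r-th row from the bottom,
   i.e. of row m + 1 - r. *)
definition restricted_perm :: "(nat \<Rightarrow> nat \<Rightarrow> bool) \<Rightarrow> nat \<Rightarrow> nat \<Rightarrow> nat \<Rightarrow> nat" where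
  "restricted_perm D m n k =
     (if k \<le> n then pipe_exit D m m k True
      else pipe_exit D m (m + n + 1 - k) n False)"

definition omega_perm :: "nat \<Rightarrow> nat \<Rightarrow> nat \<Rightarrow> nat" where
  "omega_perm m n i = (if i \<le> n then m + i else i - n)"

(* P_mu as a k x k rational matrix; entry (i,j) (1-based) is delta_{j, mu(i)};
   JNF matrices are 0-based, hence the shifts. *)
definition perm_matrix :: "nat \<Rightarrow> (nat \<Rightarrow> nat) \<Rightarrow> rat mat" where
  "perm_matrix k \<mu> = mat k k (\<lambda>(i, j). if j + 1 = \<mu> (i + 1) then 1 else 0)"

definition diagram_matrix :: "nat \<Rightarrow> (nat \<Rightarrow> nat \<times> nat) \<Rightarrow> rat mat" where
  "diagram_matrix N w = mat N N (\<lambda>(a, b).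
     (let (ia, ja) = w a; (ib, jb) = w b in
      if (ja = jb \<and> ia > ib) \<or> (ia = ib \<and> ja > jb) then 1
      else if (ja = jb \<and> ia < ib) \<or> (ia = ib \<and> ja < jb) then -1
      else 0))"

end

theory Submission
  imports Defs
begin


lemma kernel_dim_iso:
  fixes A B :: "'a::field mat" and f :: "'a vec \<Rightarrow> 'a vec"
  assumes A: "A \<in> carrier_mat r1 c1" and B: "B \<in> carrier_mat r2 c2"
  and bij: "bij_betw f (mat_kernel A) (mat_kernel B)"
  and add: "\<forall>x \<in> mat_kernel A. \<forall>y \<in> mat_kernel A. f (x + y) = f x + f y"
  and sm: "\<forall>c. \<forall>x \<in> mat_kernel A. f (c \<cdot>\<^sub>v x) = c \<cdot>\<^sub>v f x"
  shows "kernel_dim A = kernel_dim B"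
proof -
  interpret KA: kernel r1 c1 A by (unfold_locales, rule A)
  interpret KB: kernel r2 c2 B by (unfold_locales, rule B)
  interpret L: linear_map class_ring KA.VK KB.VK f
  proof (unfold_locales)
    show "f \<in> LinearCombinations.module_hom class_ring KA.VK KB.VK"
      unfolding LinearCombinations.module_hom_def using bij add sm by (auto simp: bij_betw_def)
  qed
  obtain bas where "finite bas" "KA.basis bas" using kernel_basis_exists[OF A] by auto
  then have fd: "KA.Ker.fin_dim" unfolding KA.Ker.fin_dim_def KA.Ker.basis_def by auto
  have "KA.dim = KB.dim"
    by (rule L.dim_eq[OF fd]) (use bij in \<open>auto simp: bij_betw_def\<close>)
  then show ?thesis using A B by (simp add: kernel_dim_def)
qed


lemma pe_top: "pipe_exit D m 0 j up = m + j"
  by (subst pipe_exit.simps) simp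
lemma pe_left: "i \<noteq> 0 \<Longrightarrow> pipe_exit D m i 0 up = m + 1 - i"
  by (subst pipe_exit.simps) simp
lemma pe_step: "i \<noteq> 0 \<Longrightarrow> j \<noteq> 0 \<Longrightarrow> pipe_exit D m i j up =
  (if (if D i j then up else \<not> up) then pipe_exit D m (i - 1) j True else pipe_exit D m i (j - 1) False)"
  by (subst pipe_exit.simps) (simp add: Let_def)
declare pipe_exit.simps[simp del]

lemma pe_range: "1 \<le> m \<Longrightarrow> i \<le> m \<Longrightarrow> j \<le> n \<Longrightarrow> 1 \<le> pipe_exit D m i j up \<and> pipe_exit D m i j up \<le> m + n"
proof (induction D m i j up rule: pipe_exit.induct)
  case (1 D m i j up)
  show ?case
  proof (cases "i = 0")
    case True then show ?thesis using 1 by (simp add: pe_top)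
  next
    case False
    show ?thesis
    proof (cases "j = 0")
      case True then show ?thesis using 1 False by (simp add: pe_left) arith
    next
      case j: False
      show ?thesis using 1 False j by (simp add: pe_step)
    qed
  qed
qed

lemma mult_index:
  fixes A :: "'a::comm_ring_1 mat"
  assumes "A \<in> carrier_mat r c" "x \<in> carrier_vec c" "k < r"
  shows "(A *\<^sub>v x) $ k = (\<Sum>j<c. A $$ (k, j) * x $ j)"
  using assms by (auto simp: index_mult_mat_vec scalar_prod_def lessThan_atLeast0 intro!: sum.cong)

definition Hh :: "(nat \<Rightarrow> nat \<Rightarrow> bool) \<Rightarrow> nat \<Rightarrow> rat vec \<Rightarrow> nat \<Rightarrow> nat \<Rightarrow> rat" where
  "Hh D m x i j = x $ (pipe_exit D m i j False - 1)"
definition Hv :: "(nat \<Rightarrow> nat \<Rightarrow> bool) \<Rightarrow> nat \<Rightarrow> rat vec \<Rightarrow> nat \<Rightarrow> nat \<Rightarrow> rat" where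
  "Hv D m x i j = x $ (pipe_exit D m i j True - 1)"

definition LR :: "(nat \<Rightarrow> nat \<Rightarrow> bool) \<Rightarrow> nat \<Rightarrow> nat \<Rightarrow> (nat \<Rightarrow> nat \<Rightarrow> rat) \<Rightarrow> (nat \<Rightarrow> nat \<Rightarrow> rat) \<Rightarrow> bool" where
  "LR D m n h v = (\<forall>i j. 1 \<le> i \<and> i \<le> m \<and> 1 \<le> j \<and> j \<le> n \<longrightarrow>
     (if D i j then h i j = h i (j - 1) \<and> v (i - 1) j = v i j
      else v i j = h i (j - 1) \<and> v (i - 1) j = h i j))"

definition BD :: "nat \<Rightarrow> nat \<Rightarrow> (nat \<Rightarrow> nat \<Rightarrow> rat) \<Rightarrow> (nat \<Rightarrow> nat \<Rightarrow> rat) \<Rightarrow> bool" where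
  "BD m n h v = ((\<forall>i. 1 \<le> i \<and> i \<le> m \<longrightarrow> h i 0 + h i n = 0) \<and> (\<forall>j. 1 \<le> j \<and> j \<le> n \<longrightarrow> v 0 j + v m j = 0))"

lemma LR_H: "LR D m n (Hh D m x) (Hv D m x)"
  unfolding LR_def Hh_def Hv_def by (auto simp: pe_step)

lemma sum_delta1: "1 \<le> (a::nat) \<Longrightarrow> a \<le> (K::nat) \<Longrightarrow> (\<Sum>j<K. (if j + 1 = a then 1 else 0) * (f j :: rat)) = f (a - 1)"
proof -
  assume a: "1 \<le> a" "a \<le> K"
  have "(\<Sum>j<K. (if j + 1 = a then 1 else 0) * f j) = (\<Sum>j<K. if j = a - 1 then f j else 0)"
    by (rule sum.cong) (use a in auto)
  also have "\<dots> = f (a - 1)" using a by (simp add: sum.delta)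
  finally show ?thesis .
qed

lemma perm_kernel:
  assumes m: "1 \<le> m" and x: "x \<in> carrier_vec (m + n)"
  shows "x \<in> mat_kernel (perm_matrix (m + n) (omega_perm m n) + perm_matrix (m + n) (restricted_perm D m n))
     \<longleftrightarrow> BD m n (Hh D m x) (Hv D m x)"
proof -
  let ?K = "m + n"
  let ?P = "perm_matrix ?K (omega_perm m n) + perm_matrix ?K (restricted_perm D m n)"
  have P: "?P \<in> carrier_mat ?K ?K" by (simp add: perm_matrix_def)
  have om: "1 \<le> omega_perm m n (k + 1) \<and> omega_perm m n (k + 1) \<le> ?K" if "k < ?K" for k
    using that m by (auto simp: omega_perm_def)
  have sg: "1 \<le> restricted_perm D m n (k + 1) \<and> restricted_perm D m n (k + 1) \<le> ?K" if "k < ?K" for k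
    using that m pe_range[of m m "Suc k" n D True] pe_range[of m "m + n - k" n n D False]
    by (auto simp: restricted_perm_def)
  have row: "(?P *\<^sub>v x) $ k = x $ (omega_perm m n (k + 1) - 1) + x $ (restricted_perm D m n (k + 1) - 1)"
    if k: "k < ?K" for k
  proof -
    have "(?P *\<^sub>v x) $ k = (\<Sum>j<?K. ?P $$ (k, j) * x $ j)"
      by (rule mult_index[OF P x k])
    also have "\<dots> = (\<Sum>j<?K. (if j + 1 = omega_perm m n (k + 1) then 1 else 0) * x $ j
                   + (if j + 1 = restricted_perm D m n (k + 1) then 1 else 0) * x $ j)"
    proof (rule sum.cong)
      fix j assume "j \<in> {..<?K}"
      then have j: "j < ?K" by simp
      have "?P $$ (k, j) = perm_matrix ?K (omega_perm m n) $$ (k, j) + perm_matrix ?K (restricted_perm D m n) $$ (k, j)"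
        using j k by (simp add: perm_matrix_def)
      also have "\<dots> = (if j + 1 = omega_perm m n (k + 1) then 1 else 0) + (if j + 1 = restricted_perm D m n (k + 1) then 1 else 0)"
        using j k by (simp add: perm_matrix_def)
      finally show "?P $$ (k, j) * x $ j = (if j + 1 = omega_perm m n (k + 1) then 1 else 0) * x $ j
                   + (if j + 1 = restricted_perm D m n (k + 1) then 1 else 0) * x $ j"
        by (simp only: distrib_right)
    qed simp
    also have "\<dots> = (\<Sum>j<?K. (if j + 1 = omega_perm m n (k + 1) then 1 else 0) * x $ j)
                   + (\<Sum>j<?K. (if j + 1 = restricted_perm D m n (k + 1) then 1 else 0) * x $ j)"
      by (rule sum.distrib)
    also have "\<dots> = x $ (omega_perm m n (k + 1) - 1) + x $ (restricted_perm D m n (k + 1) - 1)"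
      using sum_delta1[of "omega_perm m n (k+1)" ?K "\<lambda>j. x $ j"] sum_delta1[of "restricted_perm D m n (k+1)" ?K "\<lambda>j. x $ j"] om[OF k] sg[OF k]
      by simp
    finally show ?thesis .
  qed
  have "x \<in> mat_kernel ?P \<longleftrightarrow> (\<forall>k<?K. x $ (omega_perm m n (k + 1) - 1) + x $ (restricted_perm D m n (k + 1) - 1) = 0)"
  proof -
    have "x \<in> mat_kernel ?P \<longleftrightarrow> (\<forall>k<?K. (?P *\<^sub>v x) $ k = 0)"
    proof
      assume "x \<in> mat_kernel ?P" then show "\<forall>k<?K. (?P *\<^sub>v x) $ k = 0" using P by (auto simp: mat_kernel_def)
    next
      assume H: "\<forall>k<?K. (?P *\<^sub>v x) $ k = 0"
      show "x \<in> mat_kernel ?P" unfolding mat_kernel_def using P x H by (auto intro!: eq_vecI)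
    qed
    then show ?thesis using row by simp
  qed
  also have "\<dots> \<longleftrightarrow> BD m n (Hh D m x) (Hv D m x)"
  proof
    assume H: "\<forall>k<?K. x $ (omega_perm m n (k + 1) - 1) + x $ (restricted_perm D m n (k + 1) - 1) = 0"
    show "BD m n (Hh D m x) (Hv D m x)" unfolding BD_def
    proof (intro conjI allI impI)
      fix i assume i: "1 \<le> i \<and> i \<le> m"
      have "m + n - i < ?K" using i by auto
      note H1 = H[rule_format, OF this]
      have nle: "\<not> m + n - i + 1 \<le> n" using i by linarith
      have o1: "omega_perm m n (m + n - i + 1) - 1 = m - i" using i nle by (simp add: omega_perm_def)
      have r1: "restricted_perm D m n (m + n - i + 1) = pipe_exit D m i n False"
        using i nle by (simp add: restricted_perm_def)
      have "Hh D m x i 0 = x $ (m - i)" using i by (simp add: Hh_def pe_left)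
      then show "Hh D m x i 0 + Hh D m x i n = 0"
        using H1 unfolding o1 r1 by (simp add: Hh_def)
    next
      fix j assume j: "1 \<le> j \<and> j \<le> n"
      have "j - 1 < ?K" using j by auto
      from H[rule_format, OF this] j
      show "Hv D m x 0 j + Hv D m x m j = 0"
        by (auto simp: Hv_def omega_perm_def restricted_perm_def pe_top add.commute)
    qed
  next
    assume B: "BD m n (Hh D m x) (Hv D m x)"
    show "\<forall>k<?K. x $ (omega_perm m n (k + 1) - 1) + x $ (restricted_perm D m n (k + 1) - 1) = 0"
    proof (intro allI impI)
      fix k assume k: "k < ?K"
      show "x $ (omega_perm m n (k + 1) - 1) + x $ (restricted_perm D m n (k + 1) - 1) = 0"
      proof (cases "k < n")
        case True
        then have "Hv D m x 0 (k+1) + Hv D m x m (k+1) = 0" using B by (simp add: BD_def)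
        then show ?thesis using True by (simp add: Hv_def omega_perm_def restricted_perm_def pe_top add.commute)
      next
        case False
        have rng: "1 \<le> m + n - k \<and> m + n - k \<le> m" using False k by linarith
        have "Hh D m x (m + n - k) 0 + Hh D m x (m + n - k) n = 0" using B rng unfolding BD_def by blast
        moreover have "m + 1 - (m + n - k) - 1 = k - n" "m + n + 1 - (k + 1) = m + n - k" using False k by auto
        ultimately show ?thesis using False k by (simp add: Hh_def omega_perm_def restricted_perm_def pe_left)
      qed
    qed
  qed
  finally show ?thesis .
qed



definition sgn2 :: "nat \<times> nat \<Rightarrow> nat \<times> nat \<Rightarrow> rat" where
  "sgn2 p q = (let (ia, ja) = p; (ib, jb) = q in
      if (ja = jb \<and> ia > ib) \<or> (ia = ib \<and> ja > jb) then 1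
      else if (ja = jb \<and> ia < ib) \<or> (ia = ib \<and> ja < jb) then -1
      else 0)"

lemma diag_entry: "a < N \<Longrightarrow> b < N \<Longrightarrow> diagram_matrix N w $$ (a, b) = sgn2 (w a) (w b)"
  by (simp add: diagram_matrix_def sgn2_def)

definition R :: "(nat \<Rightarrow> nat \<Rightarrow> rat) \<Rightarrow> nat \<Rightarrow> nat \<Rightarrow> nat \<Rightarrow> nat \<Rightarrow> rat" where
  "R e m n i j = (\<Sum>i'\<in>{1..<i}. e i' j) + (\<Sum>j'\<in>{1..<j}. e i j')
     - (\<Sum>i'\<in>{i<..m}. e i' j) - (\<Sum>j'\<in>{j<..n}. e i j')"

lemma sgn2_split: "sgn2 (i, j) (i', j') * x =
   (if j' = j \<and> i' < i then x else 0) + (if i' = i \<and> j' < j then x else 0)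
   - (if j' = j \<and> i < i' then x else 0) - (if i' = i \<and> j < j' then x else 0)"
  by (auto simp: sgn2_def)

lemma sum_if_eq: "finite B \<Longrightarrow> j \<in> B \<Longrightarrow>
   (\<Sum>j'\<in>B. if j' = j \<and> P then f j' else 0) = (if P then f j else (0::rat))"
proof -
  assume "finite B" "j \<in> B"
  have "(\<Sum>j'\<in>B. if j' = j \<and> P then f j' else 0) = (\<Sum>j'\<in>B. if j' = j then (if P then f j else 0) else 0)"
    by (rule sum.cong) auto
  also have "\<dots> = (if P then f j else 0)" using \<open>finite B\<close> \<open>j \<in> B\<close> by (simp add: sum.delta)
  finally show ?thesis .
qed

lemma sum_lt: "i \<le> Suc m \<Longrightarrow> (\<Sum>i'\<in>{1..m}. if i' < i then f i' else (0::rat)) = (\<Sum>i'\<in>{1..<i}. f i')"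
proof -
  assume i: "i \<le> Suc m"
  have "(\<Sum>i'\<in>{1..m}. if i' < i then f i' else (0::rat)) = sum f {x \<in> {1..m}. x < i}"
    by (rule sum.inter_filter[symmetric]) simp
  also have "{x \<in> {1..m}. x < i} = {1..<i}" using i by auto
  finally show ?thesis .
qed

lemma sum_gt: "(\<Sum>i'\<in>{1..m}. if (i::nat) < i' then f i' else (0::rat)) = (\<Sum>i'\<in>{i<..m}. f i')"
proof -
  have "(\<Sum>i'\<in>{1..m}. if i < i' then f i' else (0::rat)) = sum f {x \<in> {1..m}. i < x}"
    by (rule sum.inter_filter[symmetric]) simp
  also have "{x \<in> {1..m}. i < x} = {i<..m}" by auto
  finally show ?thesis .
qed

lemma grid_sum:
  assumes i: "1 \<le> i" "i \<le> m" and j: "1 \<le> j" "j \<le> n"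
  shows "(\<Sum>s\<in>{1..m} \<times> {1..n}. sgn2 (i, j) s * e (fst s) (snd s)) = R e m n i j"
proof -
  have "(\<Sum>s\<in>{1..m} \<times> {1..n}. sgn2 (i, j) s * e (fst s) (snd s))
     = (\<Sum>i'\<in>{1..m}. \<Sum>j'\<in>{1..n}. sgn2 (i, j) (i', j') * e i' j')"
    by (simp add: sum.cartesian_product split_def)
  also have "\<dots> = (\<Sum>i'\<in>{1..m}. (\<Sum>j'\<in>{1..n}. if j' = j \<and> i' < i then e i' j' else 0)
      + (\<Sum>j'\<in>{1..n}. if i' = i \<and> j' < j then e i' j' else 0)
      - (\<Sum>j'\<in>{1..n}. if j' = j \<and> i < i' then e i' j' else 0)
      - (\<Sum>j'\<in>{1..n}. if i' = i \<and> j < j' then e i' j' else 0))"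
    by (simp only: sgn2_split sum.distrib sum_subtractf)
  also have "\<dots> = (\<Sum>i'\<in>{1..m}. (if i' < i then e i' j else 0)
      + (if i' = i then (\<Sum>j'\<in>{1..n}. if j' < j then e i j' else 0) else 0)
      - (if i < i' then e i' j else 0)
      - (if i' = i then (\<Sum>j'\<in>{1..n}. if j < j' then e i j' else 0) else 0))"
    using j by (intro sum.cong refl) (auto simp: sum_if_eq)
  also have "\<dots> = (\<Sum>i'\<in>{1..m}. (if i' < i then e i' j else 0))
      + (\<Sum>j'\<in>{1..n}. if j' < j then e i j' else 0)
      - (\<Sum>i'\<in>{1..m}. if i < i' then e i' j else 0)
      - (\<Sum>j'\<in>{1..n}. if j < j' then e i j' else 0)"
    using i by (simp add: sum.distrib sum_subtractf sum.delta)
  also have "\<dots> = R e m n i j"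
    using sum_lt[where i=i and m=m and f="\<lambda>i'. e i' j"] sum_lt[where i=j and m=n and f="e i"]
      sum_gt[where i=i and m=m and f="\<lambda>i'. e i' j"] sum_gt[where i=j and m=n and f="e i"] i j
    by (simp add: R_def)
  finally show ?thesis .
qed

lemma Mlemma:
  assumes bij: "bij_betw w {0..<N} (white_squares D m n)"
    and d: "d \<in> carrier_vec N"
    and e0: "\<forall>b<N. e (fst (w b)) (snd (w b)) = d $ b"
    and black0: "\<forall>i j. 1 \<le> i \<and> i \<le> m \<and> 1 \<le> j \<and> j \<le> n \<and> D i j \<longrightarrow> e i j = 0"
    and a: "a < N"
  shows "(diagram_matrix N w *\<^sub>v d) $ a = R e m n (fst (w a)) (snd (w a))"
proof -
  let ?g = "\<lambda>s. sgn2 (w a) s * e (fst s) (snd s)"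
  have M: "diagram_matrix N w \<in> carrier_mat N N" by (simp add: diagram_matrix_def)
  have "(diagram_matrix N w *\<^sub>v d) $ a = (\<Sum>b<N. diagram_matrix N w $$ (a, b) * d $ b)"
    by (rule mult_index[OF M d a])
  also have "\<dots> = (\<Sum>b\<in>{0..<N}. ?g (w b))"
    using a e0 by (auto simp: diag_entry lessThan_atLeast0 intro!: sum.cong)
  also have "\<dots> = sum ?g (white_squares D m n)"
    by (rule sum.reindex_bij_betw[OF bij])
  also have "\<dots> = sum ?g ({1..m} \<times> {1..n})"
  proof (rule sum.mono_neutral_left)
    show "white_squares D m n \<subseteq> {1..m} \<times> {1..n}" by (auto simp: white_squares_def)
    show "\<forall>s\<in>{1..m} \<times> {1..n} - white_squares D m n. ?g s = 0"
      using black0 by (auto simp: white_squares_def)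
  qed simp
  also have "\<dots> = R e m n (fst (w a)) (snd (w a))"
  proof -
    have "w a \<in> white_squares D m n" using bij a by (auto simp: bij_betw_def)
    then obtain i j where wa: "w a = (i, j)" "1 \<le> i" "i \<le> m" "1 \<le> j" "j \<le> n"
      by (auto simp: white_squares_def)
    show ?thesis using grid_sum[OF wa(2-5), of e] wa(1) by simp
  qed
  finally show ?thesis .
qed

lemma tele1: "1 \<le> (j::nat) \<Longrightarrow> (\<Sum>k\<in>{1..<j}. f k - f (k - 1)) = f (j - 1) - (f 0 :: rat)"
proof (induction j)
  case 0 then show ?case by simp
next
  case (Suc j)
  show ?case
  proof (cases "j = 0")
    case True then show ?thesis by simp
  next
    case False
    then show ?thesis using Suc by (simp add: sum.op_ivl_Suc)
  qed
qed

lemma tele2: "(j::nat) \<le> n \<Longrightarrow> (\<Sum>k\<in>{j<..n}. f k - f (k - 1)) = f n - (f j :: rat)"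
proof (induction n)
  case 0 then show ?case by simp
next
  case (Suc n)
  show ?case
  proof (cases "j = Suc n")
    case True then show ?thesis by simp
  next
    case False
    then have "{j<..Suc n} = insert (Suc n) {j<..n}" "Suc n \<notin> {j<..n}" using Suc.prems by auto
    then show ?thesis using Suc False by simp
  qed
qed

lemma TL:
  assumes i: "1 \<le> i" "i \<le> m" and j: "1 \<le> j" "j \<le> n"
    and ev: "\<forall>i' j'. 1 \<le> i' \<and> i' \<le> m \<and> 1 \<le> j' \<and> j' \<le> n \<longrightarrow>
               e i' j' = h i' j' - h i' (j' - 1) \<and> e i' j' = v (i' - 1) j' - v i' j'"
  shows "R e m n i j = h i (j - 1) + h i j - v (i - 1) j - v i j + (v 0 j + v m j) - (h i 0 + h i n)"
proof -
  have ev1: "\<And>i' j'. 1 \<le> i' \<Longrightarrow> i' \<le> m \<Longrightarrow> 1 \<le> j' \<Longrightarrow> j' \<le> n \<Longrightarrow> e i' j' = h i' j' - h i' (j' - 1)"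
    using ev by blast
  have ev2: "\<And>i' j'. 1 \<le> i' \<Longrightarrow> i' \<le> m \<Longrightarrow> 1 \<le> j' \<Longrightarrow> j' \<le> n \<Longrightarrow> e i' j' = v (i' - 1) j' - v i' j'"
    using ev by blast
  have s1: "(\<Sum>i'\<in>{1..<i}. e i' j) = (\<Sum>k\<in>{1..<i}. (- v k j) - (- v (k - 1) j))"
    using i j by (intro sum.cong refl) (simp add: ev2)
  have s2: "(\<Sum>j'\<in>{1..<j}. e i j') = (\<Sum>k\<in>{1..<j}. h i k - h i (k - 1))"
    using i j by (intro sum.cong refl) (simp add: ev1)
  have s3: "(\<Sum>i'\<in>{i<..m}. e i' j) = (\<Sum>k\<in>{i<..m}. (- v k j) - (- v (k - 1) j))"
    using i j by (intro sum.cong refl) (simp add: ev2)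
  have s4: "(\<Sum>j'\<in>{j<..n}. e i j') = (\<Sum>k\<in>{j<..n}. h i k - h i (k - 1))"
    using i j by (intro sum.cong refl) (simp add: ev1)
  show ?thesis
    unfolding R_def s1 s2 s3 s4
    using tele1[OF i(1), of "\<lambda>k. - v k j"] tele1[OF j(1), of "\<lambda>k. h i k"]
      tele2[OF i(2), of "\<lambda>k. - v k j"] tele2[OF j(2), of "\<lambda>k. h i k"]
    by simp
qed



lemma LR_D: "LR D m n h v \<Longrightarrow> 1 \<le> i \<Longrightarrow> i \<le> m \<Longrightarrow> 1 \<le> j \<Longrightarrow> j \<le> n \<Longrightarrow> D i j \<Longrightarrow>
   h i j = h i (j - 1) \<and> v (i - 1) j = v i j"
  unfolding LR_def by (drule spec[of _ i], drule spec[of _ j]) simp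

lemma LR_W: "LR D m n h v \<Longrightarrow> 1 \<le> i \<Longrightarrow> i \<le> m \<Longrightarrow> 1 \<le> j \<Longrightarrow> j \<le> n \<Longrightarrow> \<not> D i j \<Longrightarrow>
   v i j = h i (j - 1) \<and> v (i - 1) j = h i j"
  unfolding LR_def by (drule spec[of _ i], drule spec[of _ j]) simp

lemma recon:
  assumes m: "1 \<le> m" and lr: "LR D m n h v"
    and xdef: "x = vec (m + n) (\<lambda>l. if l < m then h (m - l) 0 else v 0 (l + 1 - m))"
  shows "i \<le> m \<Longrightarrow> j \<le> n \<Longrightarrow> (if up then 1 \<le> j else 1 \<le> i) \<Longrightarrow>
         x $ (pipe_exit D m i j up - 1) = (if up then v i j else h i j)"
proof (induction "i + j" arbitrary: i j up rule: less_induct)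
  case less
  show ?case
  proof (cases "i = 0")
    case True
    then have up: up using less.prems by (cases up) auto
    have "m + j - 1 < m + n" "\<not> m + j - 1 < m" "m + j - 1 + 1 - m = j" using less.prems up m by auto
    then show ?thesis using True up by (simp add: pe_top xdef)
  next
    case i0: False
    show ?thesis
    proof (cases "j = 0")
      case True
      then have up: "\<not> up" using less.prems by (cases up) auto
      have "m - i < m + n" "m - i < m" "m - (m - i) = i" using less.prems i0 m by auto
      then show ?thesis using True i0 up by (simp add: pe_left xdef)
    next
      case j0: False
      have ij: "1 \<le> i" "i \<le> m" "1 \<le> j" "j \<le> n" using i0 j0 less.prems by auto
      have IH1: "x $ (pipe_exit D m (i - 1) j True - 1) = v (i - 1) j"
        using less.hyps[of "i - 1" j True] ij by simp
      have IH2: "x $ (pipe_exit D m i (j - 1) False - 1) = h i (j - 1)"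
        using less.hyps[of i "j - 1" False] ij by simp
      have L: "if D i j then h i j = h i (j - 1) \<and> v (i - 1) j = v i j
               else v i j = h i (j - 1) \<and> v (i - 1) j = h i j"
        using LR_D[OF lr ij] LR_W[OF lr ij] by simp
      show ?thesis
        using L IH1 IH2 i0 j0 by (cases up; cases "D i j") (auto simp: pe_step)
    qed
  qed
qed

lemma ev_H: "LR D m n h v \<Longrightarrow> 1 \<le> i \<Longrightarrow> i \<le> m \<Longrightarrow> 1 \<le> j \<Longrightarrow> j \<le> n \<Longrightarrow>
   h i j - h i (j - 1) = v (i - 1) j - v i j"
proof -
  assume a: "LR D m n h v" "1 \<le> i" "i \<le> m" "1 \<le> j" "j \<le> n"
  show ?thesis
  proof (cases "D i j")
    case True with LR_D[OF a True] show ?thesis by simp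
  next
    case False with LR_W[OF a False] show ?thesis by simp
  qed
qed

lemma const_chain: "(\<forall>j. 1 \<le> j \<and> j \<le> (n::nat) \<longrightarrow> g j = g (j - 1)) \<Longrightarrow> g n = (g 0 :: rat)"
  by (induction n) auto

definition Fm :: "(nat \<Rightarrow> nat \<Rightarrow> bool) \<Rightarrow> nat \<Rightarrow> nat \<Rightarrow> (nat \<Rightarrow> nat \<times> nat) \<Rightarrow> rat vec \<Rightarrow> rat vec" where
  "Fm D m N w x = vec N (\<lambda>a. Hh D m x (fst (w a)) (snd (w a)) - Hh D m x (fst (w a)) (snd (w a) - 1))"

lemma white_props:
  assumes bij: "bij_betw w {0..<(N::nat)} (white_squares D m n)" and a: "a < N"
  shows "1 \<le> fst (w a) \<and> fst (w a) \<le> m \<and> 1 \<le> snd (w a) \<and> snd (w a) \<le> n \<and> \<not> D (fst (w a)) (snd (w a))"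
proof -
  have "w a \<in> white_squares D m n" using bij_betwE[OF bij] a by auto
  then show ?thesis by (auto simp: white_squares_def)
qed

lemma F_ker:
  assumes m: "1 \<le> m" and bij: "bij_betw w {0..<N} (white_squares D m n)"
    and bd: "BD m n (Hh D m x) (Hv D m x)"
  shows "Fm D m N w x \<in> mat_kernel (diagram_matrix N w)"
proof -
  let ?h = "Hh D m x" and ?v = "Hv D m x"
  let ?e = "\<lambda>i j. ?h i j - ?h i (j - 1)"
  have lr: "LR D m n ?h ?v" by (rule LR_H)
  have M: "diagram_matrix N w \<in> carrier_mat N N" by (simp add: diagram_matrix_def)
  have d: "Fm D m N w x \<in> carrier_vec N" by (simp add: Fm_def)
  have ev: "\<forall>i' j'. 1 \<le> i' \<and> i' \<le> m \<and> 1 \<le> j' \<and> j' \<le> n \<longrightarrow>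
               ?e i' j' = ?h i' j' - ?h i' (j' - 1) \<and> ?e i' j' = ?v (i' - 1) j' - ?v i' j'"
    using ev_H[OF lr] by auto
  have "(diagram_matrix N w *\<^sub>v Fm D m N w x) $ a = 0" if a: "a < N" for a
  proof -
    obtain i j where wa: "w a = (i, j)" by (cases "w a")
    have ij: "1 \<le> i" "i \<le> m" "1 \<le> j" "j \<le> n" "\<not> D i j" using white_props[OF bij a] wa by auto
    have "(diagram_matrix N w *\<^sub>v Fm D m N w x) $ a = R ?e m n i j"
      using Mlemma[OF bij d, of ?e, OF _ _ a] wa
      using lr unfolding LR_def by (auto simp: Fm_def)
    also have "\<dots> = ?h i (j - 1) + ?h i j - ?v (i - 1) j - ?v i j + (?v 0 j + ?v m j) - (?h i 0 + ?h i n)"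
      by (rule TL[OF ij(1-4) ev])
    also have "\<dots> = 0"
      using bd ij LR_W[OF lr ij] unfolding BD_def by auto
    finally show ?thesis .
  qed
  then show ?thesis using M d unfolding mat_kernel_def by (auto intro!: eq_vecI)
qed



lemma Hh_left: "1 \<le> i \<Longrightarrow> Hh D m x i 0 = x $ (m - i)"
  by (simp add: Hh_def pe_left)
lemma Hv_top: "1 \<le> j \<Longrightarrow> Hv D m x 0 j = x $ (m + j - 1)"
  by (simp add: Hv_def pe_top)

lemma F_inj:
  assumes m: "1 \<le> m" and bij: "bij_betw w {0..<N} (white_squares D m n)"
    and x: "x \<in> carrier_vec (m + n)" and y: "y \<in> carrier_vec (m + n)"
    and bx: "BD m n (Hh D m x) (Hv D m x)" and by': "BD m n (Hh D m y) (Hv D m y)"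
    and eq: "Fm D m N w x = Fm D m N w y"
  shows "x = y"
proof -
  have lrx: "LR D m n (Hh D m x) (Hv D m x)" and lry: "LR D m n (Hh D m y) (Hv D m y)" by (rule LR_H)+
  have diff: "Hh D m x i j - Hh D m x i (j - 1) = Hh D m y i j - Hh D m y i (j - 1)"
    if ij: "1 \<le> i" "i \<le> m" "1 \<le> j" "j \<le> n" for i j
  proof (cases "D i j")
    case True
    then show ?thesis using LR_D[OF lrx ij True] LR_D[OF lry ij True] by simp
  next
    case False
    then have wh: "(i, j) \<in> white_squares D m n" using ij by (simp add: white_squares_def)
    define a where "a = inv_into {0..<N} w (i, j)"
    have img: "(i, j) \<in> w ` {0..<N}" using wh bij by (simp add: bij_betw_def)
    have a1: "a \<in> {0..<N}" unfolding a_def by (rule inv_into_into[OF img])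
    have a2: "w a = (i, j)" unfolding a_def by (rule f_inv_into_f[OF img])
    have a: "a < N" "w a = (i, j)" using a1 a2 by auto
    have "Fm D m N w x $ a = Fm D m N w y $ a" using eq by simp
    then show ?thesis using a by (simp add: Fm_def)
  qed
  have rows: "Hh D m x i 0 = Hh D m y i 0" if i: "1 \<le> i" "i \<le> m" for i
  proof -
    let ?g = "\<lambda>j. Hh D m x i j - Hh D m y i j"
    have "\<forall>j. 1 \<le> j \<and> j \<le> n \<longrightarrow> ?g j = ?g (j - 1)"
      using diff i by (auto simp: algebra_simps)
    then have "?g n = ?g 0" by (rule const_chain)
    moreover have "Hh D m x i 0 + Hh D m x i n = 0" "Hh D m y i 0 + Hh D m y i n = 0"
      using bx by' i unfolding BD_def by auto
    ultimately show ?thesis by simp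
  qed
  have cols: "Hv D m x 0 j = Hv D m y 0 j" if j: "1 \<le> j" "j \<le> n" for j
  proof -
    let ?g = "\<lambda>i. Hv D m x i j - Hv D m y i j"
    have "\<forall>i. 1 \<le> i \<and> i \<le> m \<longrightarrow> ?g i = ?g (i - 1)"
    proof (intro allI impI)
      fix i assume i: "1 \<le> i \<and> i \<le> m"
      have "Hv D m x (i - 1) j - Hv D m x i j = Hv D m y (i - 1) j - Hv D m y i j"
        using diff[of i j] ev_H[OF lrx, of i j] ev_H[OF lry, of i j] i j by simp
      then show "?g i = ?g (i - 1)" by (simp add: algebra_simps)
    qed
    then have "?g m = ?g 0" by (rule const_chain)
    moreover have "Hv D m x 0 j + Hv D m x m j = 0" "Hv D m y 0 j + Hv D m y m j = 0"
      using bx by' j unfolding BD_def by auto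
    ultimately show ?thesis by simp
  qed
  show "x = y"
  proof (rule eq_vecI)
    show "dim_vec x = dim_vec y" using x y by simp
    fix l assume "l < dim_vec y"
    then have l: "l < m + n" using y by simp
    show "x $ l = y $ l"
    proof (cases "l < m")
      case True
      then have "m - (m - l) = l" "1 \<le> m - l" by auto
      then show ?thesis using rows[of "m - l"] True Hh_left[of "m - l" D m x] Hh_left[of "m - l" D m y] by simp
    next
      case False
      then have "m + (l + 1 - m) - 1 = l" "1 \<le> l + 1 - m" "l + 1 - m \<le> n" using l by auto
      then show ?thesis using cols[of "l + 1 - m"] Hv_top[of "l + 1 - m" D m x] Hv_top[of "l + 1 - m" D m y] by simp
    qed
  qed
qed

lemma Hh_add: "1 \<le> m \<Longrightarrow> x \<in> carrier_vec (m + n) \<Longrightarrow> y \<in> carrier_vec (m + n) \<Longrightarrow> i \<le> m \<Longrightarrow> j \<le> n \<Longrightarrow>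
  Hh D m (x + y) i j = Hh D m x i j + Hh D m y i j"
proof -
  assume a: "1 \<le> m" "x \<in> carrier_vec (m + n)" "y \<in> carrier_vec (m + n)" "i \<le> m" "j \<le> n"
  have k: "pipe_exit D m i j False - 1 < dim_vec y" using pe_range[of m i j n D False] a carrier_vecD[OF a(3)] by linarith
  show ?thesis unfolding Hh_def using index_add_vec(1)[OF k] by simp
qed

lemma Hh_smult: "1 \<le> m \<Longrightarrow> x \<in> carrier_vec (m + n) \<Longrightarrow> i \<le> m \<Longrightarrow> j \<le> n \<Longrightarrow>
  Hh D m (c \<cdot>\<^sub>v x) i j = c * Hh D m x i j"
proof -
  assume a: "1 \<le> m" "x \<in> carrier_vec (m + n)" "i \<le> m" "j \<le> n"
  have k: "pipe_exit D m i j False - 1 < dim_vec x" using pe_range[of m i j n D False] a carrier_vecD[OF a(2)] by linarith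
  show ?thesis unfolding Hh_def using index_smult_vec(1)[OF k] by simp
qed

lemma F_add:
  assumes m: "1 \<le> m" and bij: "bij_betw w {0..<N} (white_squares D m n)"
    and x: "x \<in> carrier_vec (m + n)" and y: "y \<in> carrier_vec (m + n)"
  shows "Fm D m N w (x + y) = Fm D m N w x + Fm D m N w y"
proof (rule eq_vecI)
  fix a assume "a < dim_vec (Fm D m N w x + Fm D m N w y)"
  then have a: "a < N" by (simp add: Fm_def)
  note wp = white_props[OF bij a]
  show "Fm D m N w (x + y) $ a = (Fm D m N w x + Fm D m N w y) $ a"
    using a wp Hh_add[OF m x y, of "fst (w a)" "snd (w a)" D] Hh_add[OF m x y, of "fst (w a)" "snd (w a) - 1" D]
      diff_le_self[of "snd (w a)" 1] order_trans[of "snd (w a) - 1" "snd (w a)" n]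
    by (simp add: Fm_def)
qed (simp add: Fm_def)

lemma F_smult:
  assumes m: "1 \<le> m" and bij: "bij_betw w {0..<N} (white_squares D m n)"
    and x: "x \<in> carrier_vec (m + n)"
  shows "Fm D m N w (c \<cdot>\<^sub>v x) = c \<cdot>\<^sub>v Fm D m N w x"
proof (rule eq_vecI)
  fix a assume "a < dim_vec (c \<cdot>\<^sub>v Fm D m N w x)"
  then have a: "a < N" by (simp add: Fm_def)
  note wp = white_props[OF bij a]
  show "Fm D m N w (c \<cdot>\<^sub>v x) $ a = (c \<cdot>\<^sub>v Fm D m N w x) $ a"
    using a wp Hh_smult[OF m x, of "fst (w a)" "snd (w a)" D c] Hh_smult[OF m x, of "fst (w a)" "snd (w a) - 1" D c]
      diff_le_self[of "snd (w a)" 1] order_trans[of "snd (w a) - 1" "snd (w a)" n]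
    by (simp add: Fm_def algebra_simps)
qed (simp add: Fm_def)



lemma sum_upto_Suc: "1 \<le> (j::nat) \<Longrightarrow> (\<Sum>k\<in>{1..j}. f k) = (\<Sum>k\<in>{1..j - 1}. f k) + (f j :: rat)"
proof -
  assume "1 \<le> j"
  then obtain j0 where j0: "j = Suc j0" by (cases j) auto
  show ?thesis unfolding j0 by (simp add: sum.cl_ivl_Suc)
qed

lemma F_surj:
  assumes m: "1 \<le> m" and bij: "bij_betw w {0..<N} (white_squares D m n)"
    and d: "d \<in> mat_kernel (diagram_matrix N w)"
  shows "\<exists>x \<in> mat_kernel (perm_matrix (m + n) (omega_perm m n) + perm_matrix (m + n) (restricted_perm D m n)).
           Fm D m N w x = d"
proof -
  let ?W = "white_squares D m n"
  define winv where "winv = inv_into {0..<N} w"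
  have Mc: "diagram_matrix N w \<in> carrier_mat N N" by (simp add: diagram_matrix_def)
  have dc: "d \<in> carrier_vec N" and Md: "diagram_matrix N w *\<^sub>v d = 0\<^sub>v N"
    using mat_kernelD[OF Mc d] by auto
  have winv1: "winv s < N \<and> w (winv s) = s" if "s \<in> ?W" for s
  proof -
    have img: "s \<in> w ` {0..<N}" using that bij by (simp add: bij_betw_def)
    show ?thesis unfolding winv_def using inv_into_into[OF img] f_inv_into_f[OF img] by auto
  qed
  have winv2: "winv (w b) = b" if "b < N" for b
    unfolding winv_def using bij that by (simp add: bij_betw_def inv_into_f_f)
  define e where "e i j = (if (i, j) \<in> ?W then d $ winv (i, j) else 0)" for i j
  define rs where "rs i = (\<Sum>j'\<in>{1..n}. e i j')" for i
  define cs where "cs j = (\<Sum>i'\<in>{1..m}. e i' j)" for j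
  define h where "h i j = - rs i / 2 + (\<Sum>j'\<in>{1..j}. e i j')" for i j
  define v where "v i j = cs j / 2 - (\<Sum>i'\<in>{1..i}. e i' j)" for i j
  have eh: "h i j - h i (j - 1) = e i j" if "1 \<le> j" for i j
    unfolding h_def using sum_upto_Suc[OF that, of "e i"] by simp
  have ev: "v (i - 1) j - v i j = e i j" if "1 \<le> i" for i j
    unfolding v_def using sum_upto_Suc[OF that, of "\<lambda>i'. e i' j"] by simp
  have bd: "BD m n h v" unfolding BD_def h_def v_def rs_def cs_def by simp
  have e0: "\<forall>b<N. e (fst (w b)) (snd (w b)) = d $ b"
  proof (intro allI impI)
    fix b assume b: "b < N"
    have "w b \<in> ?W" using bij_betwE[OF bij] b by auto
    then show "e (fst (w b)) (snd (w b)) = d $ b" using winv2[OF b] by (simp add: e_def)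
  qed
  have black0: "\<forall>i j. 1 \<le> i \<and> i \<le> m \<and> 1 \<le> j \<and> j \<le> n \<and> D i j \<longrightarrow> e i j = 0"
    by (simp add: e_def white_squares_def)
  have evall: "\<forall>i' j'. 1 \<le> i' \<and> i' \<le> m \<and> 1 \<le> j' \<and> j' \<le> n \<longrightarrow>
               e i' j' = h i' j' - h i' (j' - 1) \<and> e i' j' = v (i' - 1) j' - v i' j'"
    using eh ev by auto
  have lr: "LR D m n h v" unfolding LR_def
  proof (intro allI impI)
    fix i j assume ij: "1 \<le> i \<and> i \<le> m \<and> 1 \<le> j \<and> j \<le> n"
    show "if D i j then h i j = h i (j - 1) \<and> v (i - 1) j = v i j
          else v i j = h i (j - 1) \<and> v (i - 1) j = h i j"
    proof (cases "D i j")
      case True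
      then have "e i j = 0" using black0 ij by auto
      then show ?thesis using True eh[of j i] ev[of i j] ij by simp
    next
      case False
      then have wh: "(i, j) \<in> ?W" using ij by (simp add: white_squares_def)
      note a = winv1[OF wh]
      have "R e m n i j = (diagram_matrix N w *\<^sub>v d) $ winv (i, j)"
        using Mlemma[OF bij dc e0 black0 conjunct1[OF a]] conjunct2[OF a] by simp
      also have "\<dots> = 0" using Md a by simp
      finally have R0: "R e m n i j = 0" .
      have "R e m n i j = h i (j - 1) + h i j - v (i - 1) j - v i j + (v 0 j + v m j) - (h i 0 + h i n)"
        using TL[of i m j n e h v] ij evall by blast
      then have "h i (j - 1) + h i j - v (i - 1) j - v i j = 0"
        using R0 bd ij unfolding BD_def by auto
      moreover have "h i j - h i (j - 1) = v (i - 1) j - v i j" using eh[of j i] ev[of i j] ij by simp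
      ultimately show ?thesis using False by (auto simp: algebra_simps)
    qed
  qed
  define x where "x = vec (m + n) (\<lambda>l. if l < m then h (m - l) 0 else v 0 (l + 1 - m))"
  have xc: "x \<in> carrier_vec (m + n)" by (simp add: x_def)
  have Hx: "Hh D m x i j = h i j" if "1 \<le> i" "i \<le> m" "j \<le> n" for i j
    using recon[OF m lr x_def, of i j False] that by (simp add: Hh_def)
  have Vx: "Hv D m x i j = v i j" if "i \<le> m" "1 \<le> j" "j \<le> n" for i j
    using recon[OF m lr x_def, of i j True] that by (simp add: Hv_def)
  have "BD m n (Hh D m x) (Hv D m x)" using bd Hx Vx m unfolding BD_def by auto
  then have xk: "x \<in> mat_kernel (perm_matrix (m + n) (omega_perm m n) + perm_matrix (m + n) (restricted_perm D m n))"
    using perm_kernel[OF m xc] by simp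
  have "Fm D m N w x = d"
  proof (rule eq_vecI)
    show "dim_vec (Fm D m N w x) = dim_vec d" using dc by (simp add: Fm_def)
    fix a assume "a < dim_vec d"
    then have a: "a < N" using dc by simp
    note wp = white_props[OF bij a]
    have "Fm D m N w x $ a = h (fst (w a)) (snd (w a)) - h (fst (w a)) (snd (w a) - 1)"
    proof -
      have i1: "1 \<le> fst (w a)" "fst (w a) \<le> m" "snd (w a) \<le> n" "snd (w a) - 1 \<le> n" using wp by auto
      show ?thesis using a Hx[OF i1(1,2,3)] Hx[OF i1(1,2,4)] by (simp add: Fm_def)
    qed
    also have "\<dots> = e (fst (w a)) (snd (w a))" using eh wp by simp
    also have "\<dots> = d $ a" using e0 a by simp
    finally show "Fm D m N w x $ a = d $ a" .
  qed
  then show ?thesis using xk by blast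
qed


theorem theorem4p6:
  fixes m n N :: nat and D :: "nat \<Rightarrow> nat \<Rightarrow> bool" and w :: "nat \<Rightarrow> nat \<times> nat"
  assumes "m \<ge> 1" and "n \<ge> 1"
    and "bij_betw w {0..<N} (white_squares D m n)"
  shows "(\<exists>f. bij_betw f (mat_kernel (perm_matrix (m + n) (omega_perm m n)
                                      + perm_matrix (m + n) (restricted_perm D m n)))
                          (mat_kernel (diagram_matrix N w))
            \<and> (\<forall>x \<in> mat_kernel (perm_matrix (m + n) (omega_perm m n)
                                      + perm_matrix (m + n) (restricted_perm D m n)).
                \<forall>y \<in> mat_kernel (perm_matrix (m + n) (omega_perm m n)
                                      + perm_matrix (m + n) (restricted_perm D m n)).
                   f (x + y) = f x + f y)
            \<and> (\<forall>c. \<forall>x \<in> mat_kernel (perm_matrix (m + n) (omega_perm m n)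
                                      + perm_matrix (m + n) (restricted_perm D m n)).
                   f (c \<cdot>\<^sub>v x) = c \<cdot>\<^sub>v f x))
         \<and> kernel_dim (perm_matrix (m + n) (omega_perm m n)
                       + perm_matrix (m + n) (restricted_perm D m n))
           = kernel_dim (diagram_matrix N w)"
proof -
  note m = assms(1) and bij = assms(3)
  define P where "P = perm_matrix (m + n) (omega_perm m n) + perm_matrix (m + n) (restricted_perm D m n)"
  define M where "M = diagram_matrix N w"
  define f where "f = Fm D m N w"
  have Pc: "P \<in> carrier_mat (m + n) (m + n)" by (simp add: P_def perm_matrix_def)
  have Mc: "M \<in> carrier_mat N N" by (simp add: M_def diagram_matrix_def)
  have kP: "x \<in> carrier_vec (m + n) \<and> BD m n (Hh D m x) (Hv D m x)" if "x \<in> mat_kernel P" for x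
  proof -
    have xc: "x \<in> carrier_vec (m + n)" using mat_kernelD[OF Pc that] by simp
    show ?thesis using xc perm_kernel[OF m xc, of D] that by (simp add: P_def)
  qed
  have inj: "inj_on f (mat_kernel P)"
    unfolding inj_on_def f_def using kP F_inj[OF m bij] by blast
  have img: "f ` mat_kernel P = mat_kernel M"
  proof
    show "f ` mat_kernel P \<subseteq> mat_kernel M"
      using kP F_ker[OF m bij] by (auto simp: f_def M_def)
    show "mat_kernel M \<subseteq> f ` mat_kernel P"
    proof
      fix d assume "d \<in> mat_kernel M"
      then obtain x where "x \<in> mat_kernel P" "Fm D m N w x = d"
        using F_surj[OF m bij, of d] by (auto simp: M_def P_def)
      then show "d \<in> f ` mat_kernel P" by (auto simp: f_def)
    qed
  qed
  have bj: "bij_betw f (mat_kernel P) (mat_kernel M)" using inj img by (simp add: bij_betw_def)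
  have ad: "\<forall>x \<in> mat_kernel P. \<forall>y \<in> mat_kernel P. f (x + y) = f x + f y"
    using kP F_add[OF m bij] by (simp add: f_def)
  have sm: "\<forall>c. \<forall>x \<in> mat_kernel P. f (c \<cdot>\<^sub>v x) = c \<cdot>\<^sub>v f x"
    using kP F_smult[OF m bij] by (simp add: f_def)
  have "kernel_dim P = kernel_dim M" by (rule kernel_dim_iso[OF Pc Mc bj ad sm])
  then show ?thesis using bj ad sm unfolding P_def M_def by blast
qed

end
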